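(* Let $q>10$ be a prime power. There exist $\alpha\in\mathbb{F}_{q^3}\setminus\mathbb{F}_q$ and an $\mathbb{F}_q$-linear functional $f:\mathbb{F}_{q^3}\to\mathbb{F}_q$ such that, with $\beta=1$: (1) $f(\alpha/\beta)\neq 1$, and (2) for all $k\in\mathbb{F}_q$, $k\neq f\left(\frac{\alpha^2}{\beta}\right)+\left(f\left(\frac{\beta^2}{\alpha+k}\right)+k\right)f\left(\frac{\alpha}{\beta}\right)+k f\left(\frac{\beta^2}{\alpha+k}\right)f\left(\frac{1}{\beta}\right)$. *)

theory Defs
  imports "HOL-Computational_Algebra.Primes"
begin

text \<open>Ambient field F_{q^3}: a finite field type of cardinality q^3.
  Its subfield F_q is the set of elements fixed by the q-power Frobenius map.\<close>

definition base_subfield :: "nat \<Rightarrow> 'a::field set" where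
  "base_subfield q = {x. x ^ q = x}"

definition prime_power :: "nat \<Rightarrow> bool" where
  "prime_power q \<longleftrightarrow> (\<exists>p k. prime p \<and> k > 0 \<and> q = p ^ k)"

definition fq_linear_functional :: "nat \<Rightarrow> ('a::field \<Rightarrow> 'a) \<Rightarrow> bool" where
  "fq_linear_functional q f \<longleftrightarrow>
     (\<forall>x. f x \<in> base_subfield q) \<and>
     (\<forall>x y. f (x + y) = f x + f y) \<and>
     (\<forall>c x. c \<in> base_subfield q \<longrightarrow> f (c * x) = c * f x)"

end

theory Submission
  imports Defs "HOL-Computational_Algebra.Polynomial" "HOL-Number_Theory.Residues"
begin

locale frobl =
  fixes \<phi> :: "'a::field \<Rightarrow> 'a"
  assumes fadd: "\<phi> (x + y) = \<phi> x + \<phi> y"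
    and fmult: "\<phi> (x * y) = \<phi> x * \<phi> y"
    and fone: "\<phi> 1 = 1"
    and fcube: "\<phi> (\<phi> (\<phi> x)) = x"
begin

lemma fzero[simp]: "\<phi> 0 = 0"
proof -
  have "\<phi> 0 + \<phi> 0 = \<phi> 0 + 0" using fadd[of 0 0] by simp
  thus ?thesis by (rule add_left_imp_eq)
qed

lemma fminus: "\<phi> (- x) = - \<phi> x"
proof -
  have "\<phi> x + \<phi> (- x) = 0" using fadd[of x "-x"] by simp
  thus ?thesis by (simp add: add_eq_0_iff)
qed

lemma fdiff: "\<phi> (x - y) = \<phi> x - \<phi> y"
  using fadd[of x "-y"] fminus[of y] by simp

lemma finj: "\<phi> x = \<phi> y \<Longrightarrow> x = y"
  by (metis fcube)

lemma fzero_iff[simp]: "\<phi> x = 0 \<longleftrightarrow> x = 0"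
  using finj[of x 0] by auto

lemma finv: "\<phi> (inverse x) = inverse (\<phi> x)"
proof (cases "x = 0")
  case False
  have "\<phi> x * \<phi> (inverse x) = 1" using fmult[of x "inverse x"] False fone by simp
  thus ?thesis by (metis inverse_unique)
qed simp

lemma fdiv: "\<phi> (x / y) = \<phi> x / \<phi> y"
  by (simp add: divide_inverse fmult finv)

lemma fpow: "\<phi> (x ^ n) = \<phi> x ^ n"
  by (induction n) (simp_all add: fone fmult)

lemmas fsimps = fadd fmult fone fminus fdiff fdiv fpow fcube

definition Tr :: "'a \<Rightarrow> 'a" where "Tr y = y + \<phi> y + \<phi> (\<phi> y)"

lemma Tr_fix: "\<phi> (Tr y) = Tr y"
  unfolding Tr_def by (simp add: fsimps)

lemma Tr_add: "Tr (x + y) = Tr x + Tr y"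
  unfolding Tr_def by (simp add: fsimps)

lemma Tr_smult: "\<phi> c = c \<Longrightarrow> Tr (c * y) = c * Tr y"
  unfolding Tr_def by (simp add: fsimps algebra_simps)

end


locale frob3 = frobl +
  fixes \<alpha> :: 'a
  assumes al: "\<phi> \<alpha> \<noteq> \<alpha>"
    and finF: "finite {x. \<phi> x = x}"
    and cardF: "card {x. \<phi> x = x} \<ge> 8"
begin

definition "a2 = \<phi> \<alpha>"
definition "a3 = \<phi> (\<phi> \<alpha>)"

lemma phi_al[simp]: "\<phi> \<alpha> = a2" and phi_a2[simp]: "\<phi> a2 = a3" and phi_a3[simp]: "\<phi> a3 = \<alpha>"
  unfolding a2_def a3_def by (simp_all add: fcube)

lemma dist: "\<alpha> \<noteq> a2" "a2 \<noteq> a3" "\<alpha> \<noteq> a3"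
proof -
  show "\<alpha> \<noteq> a2" using al by simp
  show "a2 \<noteq> a3"
  proof
    assume "a2 = a3" hence "\<phi> \<alpha> = \<phi> (\<phi> \<alpha>)" unfolding a2_def a3_def .
    hence "\<alpha> = \<phi> \<alpha>" by (rule finj)
    thus False using al by simp
  qed
  show "\<alpha> \<noteq> a3"
  proof
    assume "\<alpha> = a3" hence "\<phi> \<alpha> = \<phi> a3" by simp
    thus False using al by simp
  qed
qed

lemma nz:
  assumes "\<phi> k = k"
  shows "\<alpha> + k \<noteq> 0" "a2 + k \<noteq> 0" "a3 + k \<noteq> 0"
proof -
  show 1: "\<alpha> + k \<noteq> 0"
  proof
    assume "\<alpha> + k = 0" hence "\<alpha> = - k" by (simp add: eq_neg_iff_add_eq_0)
    hence "\<phi> \<alpha> = \<alpha>" using assms by (simp add: fminus)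
    thus False using al by simp
  qed
  have "\<phi> (\<alpha> + k) = a2 + k" using assms by (simp add: fadd)
  thus 2: "a2 + k \<noteq> 0" using 1 fzero_iff by metis
  have "\<phi> (a2 + k) = a3 + k" using assms by (simp add: fadd)
  thus "a3 + k \<noteq> 0" using 2 fzero_iff by metis
qed

definition "h1 = \<alpha> + a2 + a3"
definition "h2 = \<alpha>^2 + a2^2 + a3^2 + \<alpha>*a2 + a2*a3 + a3*\<alpha>"
definition "NN k = (\<alpha>+k)*(a2+k)*(a3+k)"

lemma h1_fix: "\<phi> h1 = h1"
  unfolding h1_def by (simp add: fsimps algebra_simps)
lemma h2_fix: "\<phi> h2 = h2"
  unfolding h2_def by (simp add: fsimps algebra_simps)
lemma NN_fix: "\<phi> k = k \<Longrightarrow> \<phi> (NN k) = NN k"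
  unfolding NN_def by (simp add: fsimps algebra_simps)
lemma NN_nz: "\<phi> k = k \<Longrightarrow> NN k \<noteq> 0"
  unfolding NN_def using nz by simp

definition "mu p0 p1 p2 = (p0 + p1*\<alpha> + p2*\<alpha>^2)/((\<alpha>-a2)*(\<alpha>-a3))"
definition "fn p0 p1 p2 x = Tr (mu p0 p1 p2 * x)"

lemma fn_expand:
  assumes "\<phi> p0 = p0" "\<phi> p1 = p1" "\<phi> p2 = p2"
  shows "fn p0 p1 p2 x = (p0+p1*\<alpha>+p2*\<alpha>^2)/((\<alpha>-a2)*(\<alpha>-a3)) * x
     + (p0+p1*a2+p2*a2^2)/((a2-a3)*(a2-\<alpha>)) * \<phi> x
     + (p0+p1*a3+p2*a3^2)/((a3-\<alpha>)*(a3-a2)) * \<phi> (\<phi> x)"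
  unfolding fn_def Tr_def mu_def using assms by (simp add: fsimps)

lemma fn_vals:
  assumes "\<phi> p0 = p0" "\<phi> p1 = p1" "\<phi> p2 = p2"
  shows "fn p0 p1 p2 1 = p2" "fn p0 p1 p2 \<alpha> = p1 + p2 * h1"
    "fn p0 p1 p2 (\<alpha>^2) = p0 + p1 * h1 + p2 * h2"
    "\<phi> k = k \<Longrightarrow> fn p0 p1 p2 (1/(\<alpha>+k)) = (p0 - p1*k + p2*k^2) / NN k"
proof -
  have d': "\<alpha> - a2 \<noteq> 0" "a2 - a3 \<noteq> 0" "\<alpha> - a3 \<noteq> 0" "a2 - \<alpha> \<noteq> 0" "a3 - a2 \<noteq> 0" "a3 - \<alpha> \<noteq> 0"
    using dist by auto
  show "fn p0 p1 p2 1 = p2"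
    unfolding fn_expand[OF assms] using d' by (simp add: fone divide_simps) (simp add: algebra_simps power2_eq_square)
  show "fn p0 p1 p2 \<alpha> = p1 + p2 * h1"
    unfolding fn_expand[OF assms] h1_def using d' by (simp add: divide_simps) (simp add: algebra_simps power2_eq_square)
  show "fn p0 p1 p2 (\<alpha>^2) = p0 + p1 * h1 + p2 * h2"
    unfolding fn_expand[OF assms] h1_def h2_def using d' by (simp add: fpow divide_simps) (simp add: algebra_simps power2_eq_square)
  assume k: "\<phi> k = k"
  have n: "\<alpha> + k \<noteq> 0" "a2 + k \<noteq> 0" "a3 + k \<noteq> 0" using nz[OF k] by auto
  show "fn p0 p1 p2 (1/(\<alpha>+k)) = (p0 - p1*k + p2*k^2) / NN k"
    unfolding fn_expand[OF assms] NN_def using d' n k by (simp add: fsimps divide_simps) (simp add: algebra_simps power2_eq_square)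
qed


lemma avoid:
  assumes "finite B" "card B < card {x. \<phi> x = x}"
  shows "\<exists>x. \<phi> x = x \<and> x \<notin> B"
proof (rule ccontr)
  assume "\<not> ?thesis"
  hence "{x. \<phi> x = x} \<subseteq> B" by auto
  hence "card {x. \<phi> x = x} \<le> card B" using assms(1) by (rule card_mono[rotated])
  thus False using assms(2) by simp
qed

lemma roots_card:
  fixes p :: "'a poly"
  assumes "p \<noteq> 0" "degree p \<le> n"
  shows "finite {x. poly p x = 0}" "card {x. poly p x = 0} \<le> n"
  using poly_roots_finite[OF assms(1)] card_poly_roots_bound[OF assms(1)] assms(2) by auto

lemma choose_k0:
  "\<exists>k0. \<phi> k0 = k0 \<and> k0 \<noteq> 0 \<and> 3*k0^2 + 2*h1*k0 + (h1^2 - h2) \<noteq> 0"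
proof (cases "[:h1^2 - h2, 2*h1, 3:] = 0")
  case False
  define Dp where "Dp = [:h1^2 - h2, 2*h1, 3:]"
  have dg: "degree Dp \<le> 2" unfolding Dp_def
    using degree_pCons_le[of "h1^2-h2" "[:2*h1, 3:]"] degree_pCons_le[of "2*h1" "[:3:]"] by simp
  have Dn: "Dp \<noteq> 0" using False unfolding Dp_def .
  define B where "B = insert 0 {x. poly Dp x = 0}"
  have fB: "finite B" unfolding B_def using roots_card[OF Dn dg] by simp
  have "card B \<le> Suc 2" unfolding B_def using roots_card[OF Dn dg] card_insert_le_m1
    by (metis (no_types, lifting) card_insert_if le_SucI not_less_eq_eq)
  hence "card B < card {x. \<phi> x = x}" using cardF by simp
  then obtain x where x: "\<phi> x = x" "x \<notin> B" using avoid[OF fB] by blast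
  have "poly Dp x = 3*x^2 + 2*h1*x + (h1^2 - h2)" unfolding Dp_def
    by (simp add: algebra_simps power2_eq_square)
  thus ?thesis using x unfolding B_def by auto
next
  case True
  hence c: "h1^2 - h2 = 0" "2*h1 = 0" "(3::'a) = 0" by auto
  have "h1 = 3*h1 - 2*h1" by simp
  hence h1: "h1 = 0" using c by simp
  hence h2: "h2 = 0" using c by simp
  have e1: "\<alpha> + a2 + a3 = 0" using h1 unfolding h1_def .
  have e2: "\<alpha>*a2 + a2*a3 + a3*\<alpha> = 0"
  proof -
    have "\<alpha>*a2 + a2*a3 + a3*\<alpha> = (\<alpha> + a2 + a3)^2 - h2"
      unfolding h2_def by (simp add: algebra_simps power2_eq_square)
    thus ?thesis using e1 h2 by simp
  qed
  have "\<alpha>^3 = \<alpha>*a2*a3"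
  proof -
    have "\<alpha>^3 - \<alpha>*a2*a3 = \<alpha>^2 * (\<alpha> + a2 + a3) - \<alpha> * (\<alpha>*a2 + a2*a3 + a3*\<alpha>)"
      by (simp add: algebra_simps power2_eq_square power3_eq_cube)
    thus ?thesis using e1 e2 by simp
  qed
  moreover have "a2^3 = \<alpha>*a2*a3"
  proof -
    have "a2^3 - \<alpha>*a2*a3 = a2^2 * (\<alpha> + a2 + a3) - a2 * (\<alpha>*a2 + a2*a3 + a3*\<alpha>)"
      by (simp add: algebra_simps power2_eq_square power3_eq_cube)
    thus ?thesis using e1 e2 by simp
  qed
  ultimately have "(\<alpha> - a2)^3 = 0"
  proof -
    assume A: "\<alpha>^3 = \<alpha>*a2*a3" "a2^3 = \<alpha>*a2*a3"
    have "(\<alpha> - a2)^3 = \<alpha>^3 - a2^3 - 3 * (\<alpha>*a2*(\<alpha> - a2))"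
      by (simp add: algebra_simps power2_eq_square power3_eq_cube)
    thus ?thesis using A c by simp
  qed
  hence "\<alpha> = a2" by simp
  thus ?thesis using dist by simp
qed


definition "Wf k c t = t*(h1 + 2*k) - k - c*(k^2 + h1*k + (h1^2 - h2))"

lemma poly_Np: "poly ([:\<alpha>,1:]*[:a2,1:]*[:a3,1:]) k = NN k"
  unfolding NN_def by (simp add: algebra_simps)

lemma choose_c:
  assumes k0: "\<phi> k0 = k0" "k0 \<noteq> 0" "3*k0^2 + 2*h1*k0 + (h1^2 - h2) \<noteq> 0"
  shows "\<exists>c. \<phi> c = c \<and> (- NN k0 - k0*c) \<noteq> 1 \<and> Wf k0 c (- NN k0 - k0*c) \<noteq> 0 \<and>
     (\<forall>k. \<phi> k = k \<longrightarrow> k \<noteq> k0 \<longrightarrow> NN k + (- NN k0 - k0*c) + k*c = 0 \<longrightarrow> Wf k c (- NN k0 - k0*c) \<noteq> 0)"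
proof -
  define N0 where "N0 = NN k0"
  define e2 where "e2 = h1^2 - h2"
  define Dk where "Dk = 3*k0^2 + 2*h1*k0 + e2"
  have Dk: "Dk \<noteq> 0" using k0(3) unfolding Dk_def e2_def .
  define c1 where "c1 = -(N0+1)/k0"
  define c2 where "c2 = -(N0*(h1+2*k0) + k0)/Dk"
  define Np where "Np = [:\<alpha>,1:]*[:a2,1:]*[:a3,1:]"
  define T1 where "T1 = (Polynomial.smult N0 [:0,1:] - Polynomial.smult k0 Np) * [:h1, 2:] - [:0,1:] * [:k0, -1:]"
  define T3 where "T3 = (Np - [:N0:]) * [:e2, h1, 1:]"
  define Ep where "Ep = T1 - T3"
  have pEp: "poly Ep k = (N0*k - k0*NN k)*(h1 + 2*k) - k*(k0 - k) - (NN k - N0)*(k^2 + h1*k + e2)" for k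
    unfolding Ep_def T1_def T3_def using poly_Np[of k] unfolding Np_def[symmetric]
    by (simp add: algebra_simps power2_eq_square)
  have Np0: "Np \<noteq> 0" and dNp: "degree Np = 3" unfolding Np_def
    by (simp_all add: degree_mult_eq)
  have eqN: "Np - [:N0:] = Np + [:-N0:]" by simp
  have "degree (Np + [:-N0:]) = 3" using dNp by (subst degree_add_eq_left) auto
  hence dNp': "degree (Np - [:N0:]) = 3" unfolding eqN .
  hence "Np - [:N0:] \<noteq> 0" by auto
  hence dT3: "degree T3 = 5" unfolding T3_def
    using degree_mult_eq[of "Np - [:N0:]" "[:e2, h1, 1:]"] dNp' by simp
  have dT1: "degree T1 \<le> 4" unfolding T1_def
  proof (rule degree_diff_le)
    have "degree (Polynomial.smult N0 [:0,1:] - Polynomial.smult k0 Np) \<le> 3"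
      by (rule degree_diff_le) (use dNp degree_smult_le[of N0 "[:0,1:]"] degree_smult_le[of k0 Np] in auto)
    moreover have "degree [:h1, 2:] \<le> 1" by simp
    ultimately have "degree ((Polynomial.smult N0 [:0,1:] - Polynomial.smult k0 Np) * [:h1, 2:]) \<le> 3 + 1"
      by (intro order_trans[OF degree_mult_le] add_mono)
    thus "degree ((Polynomial.smult N0 [:0,1:] - Polynomial.smult k0 Np) * [:h1, 2:]) \<le> 4" by simp
    show "degree ([:0,1:] * [:k0, -1:]) \<le> 4"
      using degree_mult_le[of "[:0,1:]" "[:k0, -1:]"] by simp
  qed
  have eqE: "Ep = T1 + (- T3)" unfolding Ep_def by simp
  have "degree (T1 + (- T3)) = 5" using dT1 dT3 by (subst degree_add_eq_right) auto
  hence dEp: "degree Ep = 5" unfolding eqE .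
  hence Ep0: "Ep \<noteq> 0" by auto
  define B where "B = {c1, c2} \<union> (\<lambda>k. (NN k - N0)/(k0 - k)) ` {k. poly Ep k = 0}"
  have rts: "finite {k. poly Ep k = 0}" "card {k. poly Ep k = 0} \<le> 5"
    using roots_card[OF Ep0] dEp by auto
  have fB: "finite B" unfolding B_def using rts by simp
  have "card B \<le> card {c1, c2} + card ((\<lambda>k. (NN k - N0)/(k0 - k)) ` {k. poly Ep k = 0})"
    unfolding B_def by (rule card_Un_le)
  also have "\<dots> \<le> 2 + 5"
  proof (intro add_mono)
    show "card {c1, c2} \<le> 2" by (simp add: card_insert_if)
    show "card ((\<lambda>k. (NN k - N0)/(k0 - k)) ` {k. poly Ep k = 0}) \<le> 5"
      using card_image_le[OF rts(1), of "(\<lambda>k. (NN k - N0)/(k0 - k))"] rts(2) by linarith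
  qed
  finally have "card B < card {x. \<phi> x = x}" using cardF by simp
  then obtain c where c: "\<phi> c = c" "c \<notin> B" using avoid[OF fB] by blast
  have cc1: "c \<noteq> c1" and cc2: "c \<noteq> c2" using c(2) unfolding B_def by auto
  show ?thesis
  proof (intro exI conjI allI impI)
    show "\<phi> c = c" by fact
    show "- NN k0 - k0 * c \<noteq> 1"
    proof
      assume "- NN k0 - k0 * c = 1"
      hence "k0 * c = - (N0 + 1)" unfolding N0_def by (simp add: algebra_simps)
      hence "c = c1" unfolding c1_def using k0(2) by (simp add: eq_divide_eq mult.commute)
      thus False using cc1 by simp
    qed
    have W0: "Wf k0 c (- NN k0 - k0 * c) = - c * Dk - (N0*(h1+2*k0) + k0)"
      unfolding Wf_def Dk_def N0_def e2_def by (simp add: algebra_simps power2_eq_square)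
    show "Wf k0 c (- NN k0 - k0 * c) \<noteq> 0"
    proof
      assume "Wf k0 c (- NN k0 - k0 * c) = 0"
      hence z: "- c * Dk - (N0*(h1+2*k0) + k0) = 0" unfolding W0 .
      have "c * Dk = -(N0*(h1+2*k0) + k0) - (- c * Dk - (N0*(h1+2*k0) + k0))" by (simp add: algebra_simps)
      hence "c * Dk = -(N0*(h1+2*k0) + k0)" unfolding z by simp
      hence "c = c2" unfolding c2_def using Dk by (simp add: eq_divide_eq)
      thus False using cc2 by simp
    qed
    fix k assume k: "\<phi> k = k" "k \<noteq> k0" "NN k + (- NN k0 - k0 * c) + k * c = 0"
    have kk: "k0 - k \<noteq> 0" using k(2) by simp
    have ck: "c * (k0 - k) = NN k - N0"
    proof -
      have "c * (k0 - k) - (NN k - N0) = - (NN k + (- NN k0 - k0 * c) + k * c)"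
        unfolding N0_def by (simp add: algebra_simps)
      thus ?thesis using k(3) by simp
    qed
    have cform: "c = (NN k - N0)/(k0 - k)" using ck kk by (simp add: eq_divide_eq)
    have tk: "(- N0 - k0*c) * (k0 - k) = N0*k - k0*NN k"
    proof -
      have "(- N0 - k0*c) * (k0 - k) = - N0 * (k0 - k) - k0 * (c * (k0 - k))"
        by (simp add: algebra_simps)
      also have "\<dots> = - N0 * (k0 - k) - k0 * (NN k - N0)" unfolding ck ..
      finally show ?thesis by (simp add: algebra_simps)
    qed
    have "(k0 - k) * Wf k c (- NN k0 - k0 * c) =
       ((- N0 - k0*c) * (k0 - k))*(h1 + 2*k) - k*(k0 - k) - (c * (k0 - k))*(k^2 + h1*k + e2)"
      unfolding Wf_def e2_def N0_def by (simp add: algebra_simps)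
    also have "\<dots> = poly Ep k" unfolding pEp tk ck ..
    finally have pe: "poly Ep k = (k0 - k) * Wf k c (- NN k0 - k0 * c)" by simp
    show "Wf k c (- NN k0 - k0 * c) \<noteq> 0"
    proof
      assume "Wf k c (- NN k0 - k0 * c) = 0"
      hence "poly Ep k = 0" using pe by simp
      hence "c \<in> B" unfolding B_def using cform by auto
      thus False using c by simp
    qed
  qed
qed


lemma core:
  "\<exists>f. (\<forall>x. \<phi> (f x) = f x) \<and> (\<forall>x y. f (x + y) = f x + f y) \<and>
       (\<forall>c x. \<phi> c = c \<longrightarrow> f (c * x) = c * f x) \<and> f \<alpha> \<noteq> 1 \<and>
       (\<forall>k. \<phi> k = k \<longrightarrow> k \<noteq> f (\<alpha>^2) + (f (1/(\<alpha>+k)) + k) * f \<alpha> + k * f (1/(\<alpha>+k)) * f 1)"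
proof -
  obtain k0 where k0: "\<phi> k0 = k0" "k0 \<noteq> 0" "3*k0^2 + 2*h1*k0 + (h1^2 - h2) \<noteq> 0"
    using choose_k0 by blast
  obtain c where c: "\<phi> c = c" "(- NN k0 - k0*c) \<noteq> 1" "Wf k0 c (- NN k0 - k0*c) \<noteq> 0"
     "\<And>k. \<phi> k = k \<Longrightarrow> k \<noteq> k0 \<Longrightarrow> NN k + (- NN k0 - k0*c) + k*c = 0 \<Longrightarrow> Wf k c (- NN k0 - k0*c) \<noteq> 0"
    using choose_c[OF k0] by blast
  define t where "t = - NN k0 - k0*c"
  define p1 where "p1 = t - c*h1"
  have tf: "\<phi> t = t" unfolding t_def using k0(1) c(1) NN_fix[OF k0(1)] by (simp add: fsimps)
  have p1f: "\<phi> p1 = p1" unfolding p1_def using tf c(1) h1_fix by (simp add: fsimps)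
  define L where "L k = NN k + t + k*c" for k
  define G where "G k = ((p1*h1 + c*h2) + (t - 1)*k) * NN k + (-p1*k + c*k^2)*(t + k*c)" for k
  have LG: "G k = NN k * Wf k c t" if "L k = 0" for k
  proof -
    have tk: "t + k*c = - NN k" using that unfolding L_def by (simp add: eq_neg_iff_add_eq_0 algebra_simps)
    have "G k = ((p1*h1 + c*h2) + (t - 1)*k) * NN k + (-p1*k + c*k^2)*(- NN k)"
      unfolding G_def tk ..
    thus ?thesis unfolding Wf_def p1_def by (simp add: algebra_simps power2_eq_square)
  qed
  have L0: "L k0 = 0" unfolding L_def t_def by (simp add: algebra_simps)
  define Bz where "Bz = (\<lambda>k. - G k / L k) ` ({x. \<phi> x = x} - {k0})"
  have fBz: "finite Bz" unfolding Bz_def using finF by simp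
  have "card Bz \<le> card ({x. \<phi> x = x} - {k0})" unfolding Bz_def by (rule card_image_le) (use finF in simp)
  also have "\<dots> < card {x. \<phi> x = x}" using finF k0(1) cardF by (simp add: card_Diff1_less)
  finally obtain z where z: "\<phi> z = z" "z \<notin> Bz" using avoid[OF fBz] by blast
  have good: "z * L k + G k \<noteq> 0" if k: "\<phi> k = k" for k
  proof (cases "L k = 0")
    case True
    have "Wf k c t \<noteq> 0"
    proof (cases "k = k0")
      case True thus ?thesis using c(3) unfolding t_def by simp
    next
      case False thus ?thesis using c(4)[OF k False] \<open>L k = 0\<close> unfolding L_def t_def by simp
    qed
    thus ?thesis using LG[OF True] NN_nz[OF k] True by simp
  next
    case False
    hence "k \<noteq> k0" using L0 by auto
    show ?thesis
    proof
      assume "z * L k + G k = 0"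
      hence "z * L k = - G k" by (simp add: add_eq_0_iff2)
      hence "z = - G k / L k" using False by (metis nonzero_mult_div_cancel_right)
      hence "z \<in> Bz" unfolding Bz_def using k \<open>k \<noteq> k0\<close> by auto
      thus False using z by simp
    qed
  qed
  define f where "f = fn z p1 c"
  have vals: "f 1 = c" "f \<alpha> = p1 + c * h1" "f (\<alpha>^2) = z + p1 * h1 + c * h2"
    "\<And>k. \<phi> k = k \<Longrightarrow> f (1/(\<alpha>+k)) = (z - p1*k + c*k^2) / NN k"
    unfolding f_def using fn_vals[OF z(1) p1f c(1)] by auto
  show ?thesis
  proof (intro exI conjI allI impI)
    show "\<phi> (f x) = f x" for x unfolding f_def fn_def by (rule Tr_fix)
    show "f (x + y) = f x + f y" for x y unfolding f_def fn_def by (simp add: distrib_left Tr_add)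
    show "f (a * x) = a * f x" if "\<phi> a = a" for a x
      unfolding f_def fn_def using Tr_smult[OF that, of "mu z p1 c * x"] by (simp add: mult.left_commute)
    show "f \<alpha> \<noteq> 1" unfolding vals p1_def using c(2) unfolding t_def by simp
    fix k assume k: "\<phi> k = k"
    have N: "NN k \<noteq> 0" using NN_nz[OF k] .
    have "(f (\<alpha>^2) + (f (1/(\<alpha>+k)) + k) * f \<alpha> + k * f (1/(\<alpha>+k)) * f 1 - k) * NN k = z * L k + G k"
      unfolding vals(1-3) vals(4)[OF k] L_def G_def p1_def using N
      by (simp add: field_simps)
    thus "k \<noteq> f (\<alpha>^2) + (f (1/(\<alpha>+k)) + k) * f \<alpha> + k * f (1/(\<alpha>+k)) * f 1"
      using good[OF k] by auto
  qed
qed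

end


lemma ff_power_card:
  fixes x :: "'a :: {field,finite}"
  shows "x ^ card (UNIV :: 'a set) = x"
proof (cases "x = 0")
  case False
  have "x * (\<Prod>y\<in>UNIV-{0}. x * y) = x * x ^ (card (UNIV :: 'a set) - 1) * \<Prod>(UNIV-{0})"
    by (simp add: prod.distrib mult_ac)
  also have "x * x ^ (card (UNIV :: 'a set) - 1) = x ^ Suc (card (UNIV :: 'a set) - 1)"
    by (subst power_Suc) auto
  also have "Suc (card (UNIV :: 'a set) - 1) = card (UNIV :: 'a set)"
    using finite_UNIV_card_ge_0[where ?'a = 'a] by simp
  also have "(\<Prod>y\<in>UNIV-{0}. x * y) = (\<Prod>y\<in>UNIV-{0}. y)"
    by (rule prod.reindex_bij_witness[of _ "\<lambda>y. y / x" "\<lambda>y. x * y"]) (use False in auto)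
  finally show ?thesis
    by simp
qed (use finite_UNIV_card_ge_0[where ?'a = 'a] in auto)

theorem proposition4p6:
  fixes q :: nat
  assumes "prime_power q" and "q > 10"
    and "card (UNIV :: 'a::{field,finite} set) = q ^ 3"
  shows "\<exists>(\<alpha>::'a) f. \<alpha> \<notin> base_subfield q \<and> fq_linear_functional q f \<and>
           (let \<beta> = (1::'a) in
              f (\<alpha> / \<beta>) \<noteq> 1 \<and>
              (\<forall>k \<in> base_subfield q.
                 k \<noteq> f (\<alpha>^2 / \<beta>) + (f (\<beta>^2 / (\<alpha> + k)) + k) * f (\<alpha> / \<beta>)
                      + k * f (\<beta>^2 / (\<alpha> + k)) * f (1 / \<beta>)))"
proof -
  obtain p e where pe: "prime p" "e > 0" "q = p ^ e" using assms(1) unfolding prime_power_def by blast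
  have fin: "finite (UNIV :: 'a set)" by simp
  have cpos: "CHAR('a) > 0" using finite_imp_CHAR_pos[OF fin] .
  have cpr: "prime CHAR('a)" using prime_CHAR_semidom[OF cpos] .
  have "CHAR('a) dvd p ^ (e * 3)" using CHAR_dvd_CARD[where ?'a = 'a] assms(3) pe(3)
    by (simp add: power_mult)
  hence "CHAR('a) dvd p" using cpr prime_dvd_power by blast
  hence cp: "CHAR('a) = p" using cpr pe(1) by (simp add: primes_dvd_imp_eq)
  have fadd: "(x + y) ^ q = x ^ q + y ^ q" for x y :: 'a
    using freshmans_dream'[OF cpr, of q e x y] pe(3) cp by simp
  have q1: "q > 1" using assms(2) by simp
  have cube: "(((x::'a) ^ q) ^ q) ^ q = x" for x
  proof -
    have "((x ^ q) ^ q) ^ q = x ^ card (UNIV :: 'a set)"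
      unfolding assms(3) by (simp add: power_mult[symmetric] power3_eq_cube mult.assoc)
    thus ?thesis using ff_power_card by simp
  qed
  interpret fl: frobl "\<lambda>x::'a. x ^ q"
    by unfold_locales (simp_all add: fadd power_mult_distrib cube)
  define F where "F = {x::'a. x ^ q = x}"
  have FB: "base_subfield q = F" unfolding F_def base_subfield_def ..
  define P1 where "P1 = Polynomial.monom (1::'a) q + [:0, -1:]"
  have dP1: "degree P1 = q" unfolding P1_def using q1 by (subst degree_add_eq_left) (auto simp: degree_monom_eq)
  hence P10: "P1 \<noteq> 0" using q1 by auto
  have "F \<subseteq> {x. poly P1 x = 0}" unfolding F_def P1_def by (auto simp: poly_monom)
  hence cFle: "card F \<le> q" using card_poly_roots_bound[OF P10] poly_roots_finite[OF P10] dP1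
    by (metis card_mono le_trans)
  define K where "K = {x::'a. x + x^q + (x^q)^q = 0}"
  define P2 where "P2 = Polynomial.monom (1::'a) (q*q) + (Polynomial.monom 1 q + [:0, 1:])"
  have dP2': "degree (Polynomial.monom (1::'a) q + [:0, 1:]) = q" using q1
    by (subst degree_add_eq_left) (auto simp: degree_monom_eq)
  have qq: "q < q * q" using q1 by simp
  have dP2: "degree P2 = q * q" unfolding P2_def using qq dP2'
    by (subst degree_add_eq_left) (auto simp: degree_monom_eq)
  hence P20: "P2 \<noteq> 0" using q1 by auto
  have "K \<subseteq> {x. poly P2 x = 0}" unfolding K_def P2_def
    by (auto simp: poly_monom power_mult[symmetric] algebra_simps)
  hence cK: "card K \<le> q * q" using card_poly_roots_bound[OF P20] poly_roots_finite[OF P20] dP2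
    by (metis card_mono le_trans)
  define s where "s y = (SOME x::'a. x ^ q - x = y)" for y
  define g where "g x = (x - s (x ^ q - x), x ^ q - x)" for x
  have sp: "s (x ^ q - x) ^ q - s (x ^ q - x) = x ^ q - x" for x
    unfolding s_def by (rule someI[of "\<lambda>z. z ^ q - z = x ^ q - x" x]) simp
  have fstF: "x - s (x ^ q - x) \<in> F" for x
  proof -
    define s0 where "s0 = s (x ^ q - x)"
    have a: "(x - s0)^q = x^q - s0^q" by (rule fl.fdiff)
    have "(x - s0)^q - (x - s0) = (x^q - x) - (s0^q - s0)" unfolding a by (simp add: algebra_simps)
    also have "\<dots> = 0" using sp[of x] unfolding s0_def by simp
    finally have "(x - s0)^q = x - s0" by simp
    thus ?thesis unfolding F_def s0_def by simp
  qed
  have inj: "inj g" unfolding g_def by (rule injI) auto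
  have sndK: "x ^ q - x \<in> K" for x
    unfolding K_def using fl.fdiff[of x] fl.fdiff[of "x^q" x] fl.fdiff[of "(x^q)^q" "x^q"] cube[of x]
    by simp
  have rg: "range g \<subseteq> F \<times> K"
    unfolding g_def using fstF sndK by auto
  have "card (UNIV::'a set) = card (range g)" using inj by (simp add: card_image)
  also have "\<dots> \<le> card (F \<times> K)" using rg by (intro card_mono) auto
  also have "\<dots> = card F * card K" by (rule card_cartesian_product)
  also have "\<dots> \<le> card F * (q * q)" using cK by (rule mult_le_mono2)
  finally have "q * (q * q) \<le> card F * (q * q)" using assms(3) by (simp add: power3_eq_cube)
  hence cFge: "q \<le> card F" using qq by simp
  have "F \<noteq> UNIV"
  proof
    assume "F = UNIV"
    hence "q ^ 3 \<le> q" using cFle assms(3) by simp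
    moreover have "q < q ^ 3"
    proof -
      have "1 < q * q" using q1 qq by linarith
      hence "q * 1 < q * (q * q)" using q1 by (intro mult_strict_left_mono) auto
      thus ?thesis by (simp add: power3_eq_cube)
    qed
    ultimately show False by simp
  qed
  then obtain \<alpha> where al: "\<alpha> \<notin> F" by blast
  have fr3: "frob3 (\<lambda>x::'a. x ^ q) \<alpha>"
  proof (intro frob3.intro frob3_axioms.intro)
    show "frobl (\<lambda>x::'a. x ^ q)" by (rule fl.frobl_axioms)
    show "\<alpha> ^ q \<noteq> \<alpha>" using al unfolding F_def by simp
    show "finite {x::'a. x ^ q = x}" by simp
    show "8 \<le> card {x::'a. x ^ q = x}" using cFge assms(2) unfolding F_def by simp
  qed
  obtain f where f: "\<forall>x. f x ^ q = f x" "\<forall>x y. f (x + y) = f x + f y"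
     "\<forall>c x. c ^ q = c \<longrightarrow> f (c * x) = c * f x" "f \<alpha> \<noteq> 1"
     "\<forall>k. k ^ q = k \<longrightarrow> k \<noteq> f (\<alpha>^2) + (f (1/(\<alpha>+k)) + k) * f \<alpha> + k * f (1/(\<alpha>+k)) * f 1"
    using frob3.core[OF fr3] by blast
  show ?thesis
  proof (intro exI conjI)
    show "\<alpha> \<notin> base_subfield q" using al FB by simp
    show "fq_linear_functional q f" unfolding fq_linear_functional_def base_subfield_def using f(1-3) by auto
    show "let \<beta> = (1::'a) in f (\<alpha> / \<beta>) \<noteq> 1 \<and>
              (\<forall>k \<in> base_subfield q.
                 k \<noteq> f (\<alpha>^2 / \<beta>) + (f (\<beta>^2 / (\<alpha> + k)) + k) * f (\<alpha> / \<beta>)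
                      + k * f (\<beta>^2 / (\<alpha> + k)) * f (1 / \<beta>))"
      unfolding Let_def base_subfield_def using f(4,5) by simp
  qed
qed

end
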